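(* Let $\Gamma$ be a distance-regular graph with diameter $D\ge 4$ and valency $k$. Assume $a_1=0$ and there exists $i$ with $2\le i\le D-2$ such that $a_i\neq 0$. Then (i) for every $\theta\in\mathbb{R}$ the pair $\theta,k$ is tight; and (ii) $\Gamma$ has no further tight pairs, i.e. if $\theta,\theta'\in\mathbb{R}$ form a tight pair then $\theta=k$ or $\theta'=k$.
   Context: $\Gamma$ is a finite connected undirected graph without loops or multiple edges, distance-regular with diameter $D$, intersection numbers $a_i,b_i,c_i$ ($c_0=0$, $b_D=0$), valency $k=b_0$, $c_i+a_i+b_i=k$. For $\theta\in\mathbb{R}$, the pseudo cosine sequence for $\theta$ is the sequence of reals $\sigma_0,\dots,\sigma_D$ with $\sigma_0=1$ and $c_i\sigma_{i-1}+a_i\sigma_i+b_i\sigma_{i+1}=\theta\sigma_i$ for $0\le i\le D-1$. Two pseudo cosine sequences $\sigma_i$, $\rho_i$ form a tight pair if $(\sigma_i\rho_i)_{i=0}^D$ is a pseudo cosine sequence; reals $\theta,\theta'$ form a tight pair if their pseudo cosine sequences do. *)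

theory Defs
  imports Main Complex_Main
begin

definition simple_graph :: "'a set \<Rightarrow> ('a \<Rightarrow> 'a \<Rightarrow> bool) \<Rightarrow> bool" where
  "simple_graph V E \<longleftrightarrow> finite V \<and> V \<noteq> {} \<and>
     (\<forall>x y. E x y \<longrightarrow> x \<in> V \<and> y \<in> V) \<and>
     (\<forall>x y. E x y \<longrightarrow> E y x) \<and> (\<forall>x. \<not> E x x)"

definition gdist :: "('a \<Rightarrow> 'a \<Rightarrow> bool) \<Rightarrow> 'a \<Rightarrow> 'a \<Rightarrow> nat" where
  "gdist E x y = (LEAST n. (E ^^ n) x y)"

definition connected_graph :: "'a set \<Rightarrow> ('a \<Rightarrow> 'a \<Rightarrow> bool) \<Rightarrow> bool" where
  "connected_graph V E \<longleftrightarrow> (\<forall>x\<in>V. \<forall>y\<in>V. \<exists>n. (E ^^ n) x y)"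

definition diameter :: "'a set \<Rightarrow> ('a \<Rightarrow> 'a \<Rightarrow> bool) \<Rightarrow> nat" where
  "diameter V E = Max {gdist E x y | x y. x \<in> V \<and> y \<in> V}"

definition distance_regular ::
  "'a set \<Rightarrow> ('a \<Rightarrow> 'a \<Rightarrow> bool) \<Rightarrow> (nat \<Rightarrow> nat) \<Rightarrow> (nat \<Rightarrow> nat) \<Rightarrow> (nat \<Rightarrow> nat) \<Rightarrow> bool" where
  "distance_regular V E a b c \<longleftrightarrow> simple_graph V E \<and> connected_graph V E \<and>
     (\<forall>x\<in>V. \<forall>y\<in>V.
        card {z\<in>V. E y z \<and> gdist E x z + 1 = gdist E x y} = c (gdist E x y) \<and>
        card {z\<in>V. E y z \<and> gdist E x z = gdist E x y} = a (gdist E x y) \<and>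
        card {z\<in>V. E y z \<and> gdist E x z = gdist E x y + 1} = b (gdist E x y))"

text \<open>Pseudo cosine sequence for theta (only indices 0..D are relevant).\<close>
definition pseudo_cosine ::
  "(nat \<Rightarrow> nat) \<Rightarrow> (nat \<Rightarrow> nat) \<Rightarrow> (nat \<Rightarrow> nat) \<Rightarrow> nat \<Rightarrow> real \<Rightarrow> (nat \<Rightarrow> real) \<Rightarrow> bool" where
  "pseudo_cosine a b c D \<theta> \<sigma> \<longleftrightarrow> \<sigma> 0 = 1 \<and>
     (\<forall>i<D. real (c i) * (if i = 0 then 0 else \<sigma> (i - 1)) + real (a i) * \<sigma> i
             + real (b i) * \<sigma> (i + 1) = \<theta> * \<sigma> i)"

definition tight_seqs ::
  "(nat \<Rightarrow> nat) \<Rightarrow> (nat \<Rightarrow> nat) \<Rightarrow> (nat \<Rightarrow> nat) \<Rightarrow> nat \<Rightarrow> (nat \<Rightarrow> real) \<Rightarrow> (nat \<Rightarrow> real) \<Rightarrow> bool" where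
  "tight_seqs a b c D \<sigma> \<rho> \<longleftrightarrow> (\<exists>\<eta>. pseudo_cosine a b c D \<eta> (\<lambda>i. \<sigma> i * \<rho> i))"

definition tight_pair ::
  "(nat \<Rightarrow> nat) \<Rightarrow> (nat \<Rightarrow> nat) \<Rightarrow> (nat \<Rightarrow> nat) \<Rightarrow> nat \<Rightarrow> real \<Rightarrow> real \<Rightarrow> bool" where
  "tight_pair a b c D \<theta> \<theta>' \<longleftrightarrow> (\<exists>\<sigma> \<rho>. pseudo_cosine a b c D \<theta> \<sigma> \<and>
       pseudo_cosine a b c D \<theta>' \<rho> \<and> tight_seqs a b c D \<sigma> \<rho>)"

end

theory Submission
  imports Defs
begin


lemma gd_le: "(E ^^ n) x y \<Longrightarrow> gdist E x y \<le> n"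
  unfolding gdist_def by (rule Least_le)

lemma gd_path: assumes "connected_graph V E" "x \<in> V" "y \<in> V"
  shows "(E ^^ gdist E x y) x y"
  using assms unfolding gdist_def connected_graph_def by (metis LeastI)

lemma gd_refl: "gdist E x x = 0"
  using gd_le[where E=E and n=0 and x=x and y=x] relpowp_0_I[of E x] by simp

lemma gd_zero: assumes "connected_graph V E" "x \<in> V" "y \<in> V" "gdist E x y = 0"
  shows "x = y"
  using gd_path[OF assms(1-3)] assms(4) by (auto elim: relpowp_0_E)

lemma gd_tri: assumes "connected_graph V E" "x \<in> V" "y \<in> V" "E y z"
  shows "gdist E x z \<le> gdist E x y + 1"
  using gd_le[OF relpowp_Suc_I[OF gd_path[OF assms(1-3)] assms(4)]] by simp

lemma gd_pred: assumes sg: "simple_graph V E" and cg: "connected_graph V E"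
  and xy: "x \<in> V" "y \<in> V" and d: "gdist E x y = Suc n"
  shows "\<exists>w\<in>V. E w y \<and> gdist E x w = n"
proof -
  have "(E ^^ Suc n) x y" using gd_path[OF cg xy] d by simp
  then obtain w where w1: "(E ^^ n) x w" and w2: "E w y" by (rule relpowp_Suc_E)
  have wV: "w \<in> V" using sg w2 unfolding simple_graph_def by blast
  have "gdist E x w \<le> n" using gd_le[OF w1] .
  moreover have "gdist E x y \<le> gdist E x w + 1" using gd_tri[OF cg xy(1) wV w2] .
  ultimately show ?thesis using wV w2 d by auto
qed

lemma drg_facts:
  assumes drg: "distance_regular V E a b c" and diam: "D = diameter V E"
  shows "\<forall>j<D. c j + a j + b j = b 0" "\<forall>j. 1 \<le> j \<and> j \<le> D \<longrightarrow> c j \<ge> 1"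
    "\<forall>j<D. b j \<ge> 1"
proof -
  have sg: "simple_graph V E" and cg: "connected_graph V E"
    and reg: "\<forall>x\<in>V. \<forall>y\<in>V.
        card {z\<in>V. E y z \<and> gdist E x z + 1 = gdist E x y} = c (gdist E x y) \<and>
        card {z\<in>V. E y z \<and> gdist E x z = gdist E x y} = a (gdist E x y) \<and>
        card {z\<in>V. E y z \<and> gdist E x z = gdist E x y + 1} = b (gdist E x y)"
    using drg unfolding distance_regular_def by auto
  have fin: "finite V" and ne: "V \<noteq> {}" and EV: "\<And>x y. E x y \<Longrightarrow> x \<in> V \<and> y \<in> V"
    and sym: "\<And>x y. E x y \<Longrightarrow> E y x" and irr: "\<And>x. \<not> E x x"
    using sg unfolding simple_graph_def by auto
  let ?S = "{gdist E x y | x y. x \<in> V \<and> y \<in> V}"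
  have "?S = (\<lambda>(x,y). gdist E x y) ` (V \<times> V)" by auto
  hence finS: "finite ?S" using fin by simp
  have neS: "?S \<noteq> {}" using ne by auto
  have "D \<in> ?S" using Max_in[OF finS neS] diam unfolding diameter_def by simp
  then obtain x0 y0 where x0: "x0 \<in> V" and y0: "y0 \<in> V" and dD: "gdist E x0 y0 = D" by auto
  have ex: "\<exists>y\<in>V. gdist E x0 y = D - m" for m
  proof (induction m)
    case 0 then show ?case using y0 dD by auto
  next
    case (Suc m)
    then obtain y where y: "y \<in> V" "gdist E x0 y = D - m" by auto
    show ?case
    proof (cases "D - m = 0")
      case True then show ?thesis using y by auto
    next
      case False
      then have "gdist E x0 y = Suc (D - Suc m)" using y by simp
      from gd_pred[OF sg cg x0 y(1) this] show ?thesis by auto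
    qed
  qed
  have exj: "\<exists>y\<in>V. gdist E x0 y = j" if "j \<le> D" for j
    using ex[of "D - j"] that by auto
  have nb: "card {z\<in>V. E y z} = c (gdist E x y) + a (gdist E x y) + b (gdist E x y)"
    if x: "x \<in> V" and y: "y \<in> V" for x y
  proof -
    let ?d = "gdist E x y"
    let ?C = "{z\<in>V. E y z \<and> gdist E x z + 1 = ?d}"
    let ?A = "{z\<in>V. E y z \<and> gdist E x z = ?d}"
    let ?B = "{z\<in>V. E y z \<and> gdist E x z = ?d + 1}"
    have "{z\<in>V. E y z} = ?C \<union> ?A \<union> ?B"
    proof (rule set_eqI, rule iffI)
      fix z assume z: "z \<in> {z\<in>V. E y z}"
      then have "gdist E x z \<le> ?d + 1" using gd_tri[OF cg x y] by auto
      moreover have "?d \<le> gdist E x z + 1" using gd_tri[OF cg x _ sym] z by auto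
      ultimately show "z \<in> ?C \<union> ?A \<union> ?B" using z by auto
    qed auto
    moreover have "finite ?C" "finite ?A" "finite ?B" using fin by auto
    ultimately have "card {z\<in>V. E y z} = card ?C + card ?A + card ?B"
      by (simp add: card_Un_disjoint disjoint_iff)
    then show ?thesis using reg x y by simp
  qed
  have deg: "card {z\<in>V. E y z} = b 0" if y: "y \<in> V" for y
  proof -
    have "{z\<in>V. E y z} = {z\<in>V. E y z \<and> gdist E y z = gdist E y y + 1}"
    proof (rule set_eqI, rule iffI)
      fix z assume z: "z \<in> {z\<in>V. E y z}"
      have "(E ^^ 1) y z" using z by (simp only: relpowp_1 mem_Collect_eq)
      then have "gdist E y z \<le> 1" by (rule gd_le)
      moreover have "gdist E y z \<noteq> 0" using gd_zero[OF cg y, of z] z irr by auto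
      ultimately show "z \<in> {z\<in>V. E y z \<and> gdist E y z = gdist E y y + 1}"
        using z gd_refl[of E y] by auto
    qed auto
    then show ?thesis using reg[rule_format, OF y y] gd_refl[of E y] by simp
  qed
  show "\<forall>j<D. c j + a j + b j = b 0"
  proof (intro allI impI)
    fix j assume "j < D"
    then obtain y where "y \<in> V" "gdist E x0 y = j" using exj[of j] by auto
    then show "c j + a j + b j = b 0" using nb[OF x0] deg by metis
  qed
  show "\<forall>j. 1 \<le> j \<and> j \<le> D \<longrightarrow> c j \<ge> 1"
  proof (intro allI impI)
    fix j assume j: "1 \<le> j \<and> j \<le> D"
    then obtain y where y: "y \<in> V" "gdist E x0 y = j" using exj[of j] by auto
    have "gdist E x0 y = Suc (j - 1)" using j y by simp
    from gd_pred[OF sg cg x0 y(1) this] obtain w where w: "w \<in> V" "E w y" "gdist E x0 w = j - 1"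
      by auto
    have "w \<in> {z\<in>V. E y z \<and> gdist E x0 z + 1 = gdist E x0 y}" using w sym j y by auto
    moreover have "finite {z\<in>V. E y z \<and> gdist E x0 z + 1 = gdist E x0 y}" using fin by auto
    ultimately have "card {z\<in>V. E y z \<and> gdist E x0 z + 1 = gdist E x0 y} \<ge> 1"
      by (metis One_nat_def Suc_leI card_gt_0_iff empty_iff)
    then show "c j \<ge> 1" using reg x0 y by metis
  qed
  show "\<forall>j<D. b j \<ge> 1"
  proof (intro allI impI)
    fix j assume j: "j < D"
    then obtain y where y: "y \<in> V" "gdist E x0 y = Suc j" using exj[of "Suc j"] by auto
    from gd_pred[OF sg cg x0 y(1) y(2)] obtain w where w: "w \<in> V" "E w y" "gdist E x0 w = j"
      by auto
    have "y \<in> {z\<in>V. E w z \<and> gdist E x0 z = gdist E x0 w + 1}" using w y by auto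
    moreover have "finite {z\<in>V. E w z \<and> gdist E x0 z = gdist E x0 w + 1}" using fin by auto
    ultimately have "card {z\<in>V. E w z \<and> gdist E x0 z = gdist E x0 w + 1} \<ge> 1"
      by (metis One_nat_def Suc_leI card_gt_0_iff empty_iff)
    then show "b j \<ge> 1" using reg x0 w by metis
  qed
qed



fun pcs :: "(nat\<Rightarrow>nat)\<Rightarrow>(nat\<Rightarrow>nat)\<Rightarrow>(nat\<Rightarrow>nat)\<Rightarrow>real\<Rightarrow>nat\<Rightarrow>real\<times>real" where
  "pcs a b c \<theta> 0 = (1, (\<theta> - real (a 0)) / real (b 0))"
| "pcs a b c \<theta> (Suc n) = (snd (pcs a b c \<theta> n),
     (\<theta> * snd (pcs a b c \<theta> n) - real (a (Suc n)) * snd (pcs a b c \<theta> n)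
       - real (c (Suc n)) * fst (pcs a b c \<theta> n)) / real (b (Suc n)))"

lemma pcs_exists:
  assumes H3: "\<forall>j<D. b j \<ge> 1"
  shows "\<exists>\<sigma>. pseudo_cosine a b c D \<theta> \<sigma>"
proof -
  let ?s = "\<lambda>n. fst (pcs a b c \<theta> n)"
  have sn: "?s (Suc n) = snd (pcs a b c \<theta> n)" for n by simp
  have "pseudo_cosine a b c D \<theta> ?s"
    unfolding pseudo_cosine_def
  proof (intro conjI allI impI)
    show "?s 0 = 1" by simp
    fix i assume i: "i < D"
    have bi: "real (b i) \<noteq> 0" using H3 i by force
    show "real (c i) * (if i = 0 then 0 else ?s (i - 1)) + real (a i) * ?s i
             + real (b i) * ?s (i + 1) = \<theta> * ?s i"
    proof (cases i)
      case 0 then show ?thesis using bi by (simp add: field_simps)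
    next
      case (Suc n) then show ?thesis using bi by (simp add: field_simps)
    qed
  qed
  then show ?thesis by blast
qed

lemma part1:
  assumes H1: "\<forall>j<D. c j + a j + b j = b 0" and H3: "\<forall>j<D. b j \<ge> 1"
  shows "tight_pair a b c D \<theta> (real (b 0))"
proof -
  obtain \<sigma> where s: "pseudo_cosine a b c D \<theta> \<sigma>" using pcs_exists[OF H3] by blast
  have one: "pseudo_cosine a b c D (real (b 0)) (\<lambda>_. 1)"
    unfolding pseudo_cosine_def
  proof (intro conjI allI impI)
    fix i assume i: "i < D"
    have e: "c i + a i + b i = b 0" using H1 i by auto
    show "real (c i) * (if i = 0 then 0 else 1) + real (a i) * 1 + real (b i) * 1 = real (b 0) * 1"
    proof (cases "i = 0")
      case True then show ?thesis using e by simp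
    next
      case False
      have "real (c i) + real (a i) + real (b i) = real (b 0)" using e
        by (metis of_nat_add)
      then show ?thesis using False by simp
    qed
  qed simp
  have "tight_seqs a b c D \<sigma> (\<lambda>_. 1)" unfolding tight_seqs_def using s by auto
  then show ?thesis unfolding tight_pair_def using s one by blast
qed



lemma step1_alg:
  fixes k c s1 r1 s2 r2 :: real
  assumes k: "k > 0" and c: "c > 0" and kc: "k - c > 0"
    and e1: "c + (k-c)*s2 = k*s1*s1" and e2: "c + (k-c)*r2 = k*r1*r1"
    and e3: "c + (k-c)*(s2*r2) = k*(s1*r1)*(s1*r1)"
  shows "(s1*s1 - 1)*(r1*r1 - 1) = 0"
proof -
  have f1: "(k-c)*s2 = k*s1*s1 - c" using e1 by linarith
  have f2: "(k-c)*r2 = k*r1*r1 - c" using e2 by linarith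
  have f3: "(k-c)*(s2*r2) = k*(s1*r1)*(s1*r1) - c" using e3 by linarith
  have "(k-c)*((k-c)*(s2*r2)) = ((k-c)*s2)*((k-c)*r2)" by (simp only: mult_ac)
  also have "\<dots> = (k*s1*s1 - c)*(k*r1*r1 - c)" by (simp only: f1 f2)
  finally have "(k-c)*((k-c)*(s2*r2)) = (k*s1*s1 - c)*(k*r1*r1 - c)" .
  then have "(k-c)*(k*(s1*r1)*(s1*r1) - c) = (k*s1*s1 - c)*(k*r1*r1 - c)" by (simp only: f3)
  then have "c*k*((s1*s1 - 1)*(r1*r1 - 1)) = 0" by (simp add: algebra_simps)
  then show ?thesis using c k by simp
qed

lemma core2:
  fixes k ci ai bi c' a' b' s S1 S2 p0 p1 p2 p3 t :: real
  assumes hk: "ci+ai+bi = k" and hk': "c'+a'+b' = k" and ai: "ai>0" and bi: "bi>0"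
    and b': "b'>0" and c': "c'>0" and a': "a' \<ge> 0" and ss: "s*s = 1"
    and si: "ci*(-s) + ai*s + bi*S1 = -k*s"
    and si1: "c'*s + a'*S1 + b'*S2 = -k*S1"
    and ri: "ci*p0 + ai*p1 + bi*p2 = t*p1"
    and ri1: "c'*p1 + a'*p2 + b'*p3 = t*p2"
    and ti: "ci*((-s)*p0) + ai*(s*p1) + bi*(S1*p2) = (-t)*(s*p1)"
    and ti1: "c'*(s*p1) + a'*(S1*p2) + b'*(S2*p3) = (-t)*(S1*p2)"
  shows "p2 = p1 \<and> (p1 = 0 \<or> t = k)"
proof -
  have "ci*(-s) + ai*s + bi*S1 = -(ci+ai+bi)*s" using si hk by simp
  then have S1: "bi*S1 = -s*(bi+2*ai)" by (simp add: algebra_simps)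
  have "ci*((-s)*p0) + ai*(s*p1) + (bi*S1)*p2 = (-t)*(s*p1)" using ti by (simp only: mult.assoc)
  then have "ci*((-s)*p0) + ai*(s*p1) + (-s*(bi+2*ai))*p2 = (-t)*(s*p1)" by (simp only: S1)
  then have "s*(-ci*p0 + ai*p1 - (bi+2*ai)*p2 + t*p1) = 0" by (simp add: algebra_simps)
  moreover have "s \<noteq> 0" using ss by auto
  ultimately have eq: "-ci*p0 + ai*p1 - (bi+2*ai)*p2 + t*p1 = 0" by simp
  have x: "-ci*p0 + ai*p1 - (bi+2*ai)*p2 + t*p1 = -(ci*p0) + ai*p1 - bi*p2 - 2*(ai*p2) + t*p1"
    by (simp add: algebra_simps)
  have y: "ai*(p1-p2) = ai*p1 - ai*p2" by (simp add: algebra_simps)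
  have "ai*(p1 - p2) = 0" using x y ri eq by linarith
  then have p21: "p2 = p1" using ai by simp
  have r3: "b'*p3 = (t - c' - a')*p1" using ri1 p21 by (simp add: algebra_simps)
  have S2: "b'*S2 = -(k+a')*S1 - c'*s" using si1 by (simp add: algebra_simps)
  have "p1 = 0 \<or> t = k"
  proof (cases "p1 = 0")
    case False
    have "c'*(s*p1) + a'*(S1*p1) + S2*(b'*p3) = (-t)*(S1*p1)" using ti1 p21
      by (simp only: mult_ac)
    then have "c'*(s*p1) + a'*(S1*p1) + S2*((t - c' - a')*p1) = (-t)*(S1*p1)" by (simp only: r3)
    then have "p1*(c'*s + a'*S1 + S2*(t-c'-a') + t*S1) = 0" by (simp add: algebra_simps)
    then have q: "c'*s + a'*S1 + S2*(t-c'-a') + t*S1 = 0" using False by simp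
    have "b'*(c'*s + a'*S1 + S2*(t-c'-a') + t*S1) = b'*c'*s + b'*(a'+t)*S1 + (t-c'-a')*(b'*S2)"
      by (simp add: algebra_simps)
    also have "\<dots> = b'*c'*s + b'*(a'+t)*S1 + (t-c'-a')*(-(k+a')*S1 - c'*s)" by (simp only: S2)
    also have "\<dots> = (t-k)*(-(c'+2*a')*S1 - c'*s)" unfolding hk'[symmetric] by (simp add: algebra_simps)
    finally have tk: "(t-k)*(-(c'+2*a')*S1 - c'*s) = 0" using q by simp
    have bW: "bi*(-(c'+2*a')*S1 - c'*s) = s*(2*c'*ai + 2*a'*(bi+2*ai))"
    proof -
      have "bi*(-(c'+2*a')*S1 - c'*s) = -(c'+2*a')*(bi*S1) - bi*c'*s" by (simp add: algebra_simps)
      also have "\<dots> = -(c'+2*a')*(-s*(bi+2*ai)) - bi*c'*s" by (simp only: S1)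
      also have "\<dots> = s*(2*c'*ai + 2*a'*(bi+2*ai))" by (simp add: algebra_simps)
      finally show ?thesis .
    qed
    have sn: "s \<noteq> 0" using ss by auto
    have "2*c'*ai > 0" using c' ai by simp
    moreover have "2*a'*(bi+2*ai) \<ge> 0" using a' ai bi by simp
    ultimately have "2*c'*ai + 2*a'*(bi+2*ai) \<noteq> 0" by linarith
    then have "s*(2*c'*ai + 2*a'*(bi+2*ai)) \<noteq> 0" using sn by simp
    then have "-(c'+2*a')*S1 - c'*s \<noteq> 0" using bW by auto
    then show ?thesis using tk by simp
  qed simp
  then show ?thesis using p21 by simp
qed

lemma pc_eq0:
  assumes "pseudo_cosine a b c D \<theta> f" "0 < D"
  shows "real (a 0) * f 0 + real (b 0) * f 1 = \<theta> * f 0"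
  using assms unfolding pseudo_cosine_def by auto

lemma pc_eqS:
  assumes "pseudo_cosine a b c D \<theta> f" "Suc n < D"
  shows "real (c (Suc n)) * f n + real (a (Suc n)) * f (Suc n) + real (b (Suc n)) * f (Suc (Suc n))
     = \<theta> * f (Suc n)"
proof -
  have "\<forall>i<D. real (c i) * (if i = 0 then 0 else f (i - 1)) + real (a i) * f i
             + real (b i) * f (i + 1) = \<theta> * f i" using assms(1) unfolding pseudo_cosine_def by blast
  then have "real (c (Suc n)) * (if Suc n = 0 then 0 else f (Suc n - 1)) + real (a (Suc n)) * f (Suc n)
             + real (b (Suc n)) * f (Suc n + 1) = \<theta> * f (Suc n)" using assms(2) by blast
  then show ?thesis by simp
qed

lemma pc_0: "pseudo_cosine a b c D \<theta> f \<Longrightarrow> f 0 = 1"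
  unfolding pseudo_cosine_def by auto

lemma minus_k:
  fixes \<sigma> \<rho> :: "nat \<Rightarrow> real"
  assumes H1: "\<forall>j<D. c j + a j + b j = b 0" and H2: "\<forall>j. 1 \<le> j \<and> j \<le> D \<longrightarrow> c j \<ge> 1"
    and H3: "\<forall>j<D. b j \<ge> 1" and D4: "D \<ge> 4" and a1: "a 1 = 0"
    and ai: "\<exists>i. 2 \<le> i \<and> i \<le> D - 2 \<and> a i \<noteq> 0"
    and ps: "pseudo_cosine a b c D (- real (b 0)) \<sigma>"
    and pr: "pseudo_cosine a b c D t \<rho>"
    and pt: "pseudo_cosine a b c D \<eta> (\<lambda>i. \<sigma> i * \<rho> i)"
  shows "t = real (b 0)"
proof -
  have D0: "0 < D" using D4 by simp
  have a0: "a 0 = 0" using H1 D0 by auto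
  have k1: "b 0 \<ge> 1" using H3 D0 by auto
  define k where "k = real (b 0)"
  have kpos: "k > 0" using k1 unfolding k_def by simp
  obtain i1 where i1: "2 \<le> i1" "i1 \<le> D - 2" "a i1 \<noteq> 0" using ai by blast
  define i0 where "i0 = (LEAST i. 1 \<le> i \<and> a i \<noteq> 0)"
  have i0p: "1 \<le> i0 \<and> a i0 \<noteq> 0" unfolding i0_def by (rule LeastI[of _ i1]) (use i1 in auto)
  have i0le: "i0 \<le> i1" unfolding i0_def by (rule Least_le) (use i1 in auto)
  have below: "\<And>j. j < i0 \<Longrightarrow> \<not> (1 \<le> j \<and> a j \<noteq> 0)" unfolding i0_def by (rule not_less_Least)
  have "i0 \<noteq> 1" using i0p a1 by auto
  then obtain m where m: "i0 = Suc m" "1 \<le> m" using i0p by (cases i0) auto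
  have mD: "Suc (Suc m) < D" using m i0le i1 D4 by linarith
  have alt: "\<sigma> j = (-1)^j \<and> \<sigma> (Suc j) = (-1)^(Suc j)" if "j < i0" for j
    using that
  proof (induction j)
    case 0
    have "\<sigma> 0 = 1" using pc_0[OF ps] .
    moreover have "real (b 0) * \<sigma> 1 = - real (b 0)" using pc_eq0[OF ps D0] a0 \<open>\<sigma> 0 = 1\<close> by simp
    moreover have "real (b 0) \<noteq> 0" using k1 by simp
    ultimately have "real (b 0) * \<sigma> 1 = real (b 0) * (-1)" by simp
    then have "\<sigma> 1 = -1" using \<open>real (b 0) \<noteq> 0\<close> by (metis mult_cancel_left)
    then show ?case using \<open>\<sigma> 0 = 1\<close> by simp
  next
    case (Suc j)
    then have IH: "\<sigma> j = (-1)^j" "\<sigma> (Suc j) = (-1)^(Suc j)" by auto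
    have jD: "Suc j < D" using Suc.prems m mD by linarith
    have aj: "a (Suc j) = 0" using below[of "Suc j"] Suc.prems by auto
    have cb: "real (c (Suc j)) + real (b (Suc j)) = real (b 0)" using H1 jD aj
      by (metis add.right_neutral of_nat_add)
    have bj: "real (b (Suc j)) \<ge> 1" using H3 jD by auto
    have e: "real (c (Suc j)) * \<sigma> j + real (b (Suc j)) * \<sigma> (Suc (Suc j)) = - real (b 0) * \<sigma> (Suc j)"
      using pc_eqS[OF ps jD] aj by simp
    have "real (b (Suc j)) * \<sigma> (Suc (Suc j)) = real (b 0) * (-1)^j - real (c (Suc j)) * (-1)^j"
      using e IH by simp
    also have "\<dots> = real (b (Suc j)) * (-1)^j" by (simp add: cb[symmetric] algebra_simps)
    finally have "real (b (Suc j)) * \<sigma> (Suc (Suc j)) = real (b (Suc j)) * (-1)^j" .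
    then have "\<sigma> (Suc (Suc j)) = (-1)^j" using bj by simp
    then show ?case using IH by simp
  qed
  have sm: "\<sigma> m = - \<sigma> (Suc m)" using alt[of m] m by simp
  have ssq: "\<sigma> (Suc m) * \<sigma> (Suc m) = 1" using alt[of m] m
    by (simp add: power_mult_distrib[symmetric])
  have r1: "real (b 0) * \<rho> 1 = t" using pc_eq0[OF pr D0] a0 pc_0[OF pr] by simp
  have t1: "real (b 0) * (\<sigma> 1 * \<rho> 1) = \<eta>" using pc_eq0[OF pt D0] a0 pc_0[OF pr] pc_0[OF ps] by simp
  have s1: "\<sigma> 1 = -1" using alt[of 0] m by simp
  have eta: "\<eta> = - t" using r1 t1 s1 by simp
  have m1D: "Suc m < D" using mD by simp
  have hk: "real (c (Suc m)) + real (a (Suc m)) + real (b (Suc m)) = k"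
    using H1 m1D unfolding k_def by (metis of_nat_add)
  have hk': "real (c (Suc (Suc m))) + real (a (Suc (Suc m))) + real (b (Suc (Suc m))) = k"
    using H1 mD unfolding k_def by (metis of_nat_add)
  have aip: "real (a (Suc m)) > 0" using i0p m by simp
  have "b (Suc m) \<ge> 1" using H3 m1D by blast
  then have bip: "real (b (Suc m)) > 0" by simp
  have "b (Suc (Suc m)) \<ge> 1" using H3 mD by blast
  then have b'p: "real (b (Suc (Suc m))) > 0" by simp
  have "c (Suc (Suc m)) \<ge> 1" using H2 mD by simp
  then have c'p: "real (c (Suc (Suc m))) > 0" by simp
  have si: "real (c (Suc m)) * (- \<sigma> (Suc m)) + real (a (Suc m)) * \<sigma> (Suc m)
      + real (b (Suc m)) * \<sigma> (Suc (Suc m)) = - k * \<sigma> (Suc m)"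
    using pc_eqS[OF ps m1D] sm unfolding k_def by simp
  have si1: "real (c (Suc (Suc m))) * \<sigma> (Suc m) + real (a (Suc (Suc m))) * \<sigma> (Suc (Suc m))
      + real (b (Suc (Suc m))) * \<sigma> (Suc (Suc (Suc m))) = - k * \<sigma> (Suc (Suc m))"
    using pc_eqS[OF ps mD] unfolding k_def by simp
  have ri: "real (c (Suc m)) * \<rho> m + real (a (Suc m)) * \<rho> (Suc m)
      + real (b (Suc m)) * \<rho> (Suc (Suc m)) = t * \<rho> (Suc m)"
    using pc_eqS[OF pr m1D] .
  have ri1: "real (c (Suc (Suc m))) * \<rho> (Suc m) + real (a (Suc (Suc m))) * \<rho> (Suc (Suc m))
      + real (b (Suc (Suc m))) * \<rho> (Suc (Suc (Suc m))) = t * \<rho> (Suc (Suc m))"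
    using pc_eqS[OF pr mD] .
  have ti: "real (c (Suc m)) * ((- \<sigma> (Suc m)) * \<rho> m) + real (a (Suc m)) * (\<sigma> (Suc m) * \<rho> (Suc m))
      + real (b (Suc m)) * (\<sigma> (Suc (Suc m)) * \<rho> (Suc (Suc m))) = (- t) * (\<sigma> (Suc m) * \<rho> (Suc m))"
    using pc_eqS[OF pt m1D] sm eta by simp
  have ti1: "real (c (Suc (Suc m))) * (\<sigma> (Suc m) * \<rho> (Suc m))
      + real (a (Suc (Suc m))) * (\<sigma> (Suc (Suc m)) * \<rho> (Suc (Suc m)))
      + real (b (Suc (Suc m))) * (\<sigma> (Suc (Suc (Suc m))) * \<rho> (Suc (Suc (Suc m))))
      = (- t) * (\<sigma> (Suc (Suc m)) * \<rho> (Suc (Suc m)))"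
    using pc_eqS[OF pt mD] eta by simp
  from core2[OF hk hk' aip bip b'p c'p _ ssq si si1 ri ri1 ti ti1]
  have res: "\<rho> (Suc (Suc m)) = \<rho> (Suc m) \<and> (\<rho> (Suc m) = 0 \<or> t = k)" by simp
  show ?thesis
  proof (rule ccontr)
    assume ne: "t \<noteq> real (b 0)"
    then have z: "\<rho> (Suc m) = 0" "\<rho> (Suc (Suc m)) = 0" using res unfolding k_def by auto
    have bkw: "\<rho> (Suc m - q) = 0 \<and> \<rho> (Suc (Suc m) - q) = 0" if "q \<le> Suc m" for q
      using that
    proof (induction q)
      case 0 then show ?case using z by simp
    next
      case (Suc q)
      define n where "n = m - q"
      have n1: "Suc m - q = Suc n" "Suc (Suc m) - q = Suc (Suc n)" "Suc m - Suc q = n"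
        "Suc (Suc m) - Suc q = Suc n" using Suc.prems unfolding n_def by auto
      have IH: "\<rho> (Suc n) = 0" "\<rho> (Suc (Suc n)) = 0" using Suc n1 by auto
      have nD: "Suc n < D" using mD unfolding n_def by linarith
      have "real (c (Suc n)) * \<rho> n = 0" using pc_eqS[OF pr nD] IH by simp
      moreover have "c (Suc n) \<ge> 1" using H2 nD by auto
      ultimately have "\<rho> n = 0" by simp
      then show ?case using n1 IH by simp
    qed
    from bkw[of "Suc m"] have "\<rho> 0 = 0" by simp
    then show False using pc_0[OF pr] by simp
  qed
qed

lemma part2:
  assumes H1: "\<forall>j<D. c j + a j + b j = b 0" and H2: "\<forall>j. 1 \<le> j \<and> j \<le> D \<longrightarrow> c j \<ge> 1"
    and H3: "\<forall>j<D. b j \<ge> 1" and D4: "D \<ge> 4" and a1: "a 1 = 0"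
    and ai: "\<exists>i. 2 \<le> i \<and> i \<le> D - 2 \<and> a i \<noteq> 0"
    and tp: "tight_pair a b c D \<theta> \<theta>'"
  shows "\<theta> = real (b 0) \<or> \<theta>' = real (b 0)"
proof -
  obtain \<sigma> \<rho> \<eta> where ps: "pseudo_cosine a b c D \<theta> \<sigma>" and pr: "pseudo_cosine a b c D \<theta>' \<rho>"
    and pt: "pseudo_cosine a b c D \<eta> (\<lambda>i. \<sigma> i * \<rho> i)"
    using tp unfolding tight_pair_def tight_seqs_def by blast
  have pt': "pseudo_cosine a b c D \<eta> (\<lambda>i. \<rho> i * \<sigma> i)" using pt by (simp add: mult.commute)
  have D0: "0 < D" and D1: "Suc 0 < D" using D4 by auto
  have a0: "a 0 = 0" using H1 D0 by auto
  have k1: "b 0 \<ge> 1" using H3 D0 by auto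
  define k where "k = real (b 0)"
  have kpos: "k > 0" using k1 unfolding k_def by simp
  have "c 1 \<ge> 1" using H2 D1 by simp
  then have c1: "real (c 1) > 0" by simp
  have "c 1 + a 1 + b 1 = b 0" using H1 D1 by simp
  then have "real (c 1) + real (b 1) = real (b 0)" using a1 by (metis add.right_neutral of_nat_add)
  then have b1: "real (b 1) = k - real (c 1)" unfolding k_def by simp
  have "b 1 \<ge> 1" using H3 D1 by simp
  then have b1p: "k - real (c 1) > 0" using b1 by simp
  have th: "\<theta> = k * \<sigma> 1" using pc_eq0[OF ps D0] a0 pc_0[OF ps] unfolding k_def by simp
  have th': "\<theta>' = k * \<rho> 1" using pc_eq0[OF pr D0] a0 pc_0[OF pr] unfolding k_def by simp
  have et: "\<eta> = k * (\<sigma> 1 * \<rho> 1)" using pc_eq0[OF pt D0] a0 pc_0[OF pr] pc_0[OF ps] unfolding k_def by simp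
  have e1: "real (c 1) + (k - real (c 1)) * \<sigma> 2 = k * \<sigma> 1 * \<sigma> 1"
    using pc_eqS[OF ps D1] pc_0[OF ps] a1 b1 th by (simp add: numeral_2_eq_2)
  have e2: "real (c 1) + (k - real (c 1)) * \<rho> 2 = k * \<rho> 1 * \<rho> 1"
    using pc_eqS[OF pr D1] pc_0[OF pr] a1 b1 th' by (simp add: numeral_2_eq_2)
  have e3: "real (c 1) + (k - real (c 1)) * (\<sigma> 2 * \<rho> 2) = k * (\<sigma> 1 * \<rho> 1) * (\<sigma> 1 * \<rho> 1)"
    using pc_eqS[OF pt D1] pc_0[OF pr] pc_0[OF ps] a1 b1 et by (simp add: numeral_2_eq_2)
  have "(\<sigma> 1 * \<sigma> 1 - 1) * (\<rho> 1 * \<rho> 1 - 1) = 0"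
    by (rule step1_alg[OF kpos c1 b1p e1 e2 e3])
  then have "\<sigma> 1 = 1 \<or> \<sigma> 1 = -1 \<or> \<rho> 1 = 1 \<or> \<rho> 1 = -1"
    by (simp add: square_eq_1_iff)
  then show ?thesis
  proof (elim disjE)
    assume "\<sigma> 1 = 1" then show ?thesis using th k_def by simp
  next
    assume "\<sigma> 1 = -1" then have "\<theta> = - real (b 0)" using th k_def by simp
    then show ?thesis using minus_k[OF H1 H2 H3 D4 a1 ai _ pr pt] ps by auto
  next
    assume "\<rho> 1 = 1" then show ?thesis using th' k_def by simp
  next
    assume "\<rho> 1 = -1" then have "\<theta>' = - real (b 0)" using th' k_def by simp
    then show ?thesis using minus_k[OF H1 H2 H3 D4 a1 ai _ ps pt'] pr by auto
  qed
qed


theorem theorem10p1: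
  fixes V :: "'a set" and E :: "'a \<Rightarrow> 'a \<Rightarrow> bool" and a b c :: "nat \<Rightarrow> nat" and D :: nat
  assumes drg: "distance_regular V E a b c"
    and diam: "D = diameter V E"
    and D4: "D \<ge> 4"
    and a1: "a 1 = 0"
    and ai: "\<exists>i. 2 \<le> i \<and> i \<le> D - 2 \<and> a i \<noteq> 0"
  shows "(\<forall>\<theta>::real. tight_pair a b c D \<theta> (real (b 0))) \<and>
         (\<forall>\<theta> \<theta>' :: real. tight_pair a b c D \<theta> \<theta>' \<longrightarrow> \<theta> = real (b 0) \<or> \<theta>' = real (b 0))"
  using part1[OF drg_facts(1)[OF drg diam] drg_facts(3)[OF drg diam]]
    part2[OF drg_facts[OF drg diam] D4 a1 ai] by blast

end
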